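(* Let $(\mathsf P,\mathcal O)$ be a semitopology. Then every topen set $T$ is contained in a unique maximal topen set (maximal with respect to subset inclusion among topen sets).
   Context: A semitopology is a pair $(\mathsf P,\mathcal O)$ where $\mathsf P$ is a set and $\mathcal O\subseteq\mathcal P(\mathsf P)$ contains $\varnothing$ and $\mathsf P$ and is closed under arbitrary unions. Write $X\between Y$ when $X\cap Y\neq\varnothing$. A set $T\subseteq\mathsf P$ is transitive when for all $O,O'\in\mathcal O$, $O\between T$ and $T\between O'$ imply $O\between O'$. A set is topen when it is nonempty, open, and transitive. *)

theory Defs
  imports Main
begin

definition semitopology :: "'a set \<Rightarrow> 'a set set \<Rightarrow> bool" where
  "semitopology P Opens \<longleftrightarrow>
     (\<forall>U\<in>Opens. U \<subseteq> P) \<and> {} \<in> Opens \<and> P \<in> Opens \<and>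
     (\<forall>X. X \<subseteq> Opens \<longrightarrow> \<Union>X \<in> Opens)"

definition between :: "'a set \<Rightarrow> 'a set \<Rightarrow> bool" where
  "between X Y \<longleftrightarrow> X \<inter> Y \<noteq> {}"

definition transitive_set :: "'a set set \<Rightarrow> 'a set \<Rightarrow> bool" where
  "transitive_set Opens T \<longleftrightarrow>
     (\<forall>U\<in>Opens. \<forall>V\<in>Opens. between U T \<and> between T V \<longrightarrow> between U V)"

definition topen :: "'a set set \<Rightarrow> 'a set \<Rightarrow> bool" where
  "topen Opens T \<longleftrightarrow> T \<noteq> {} \<and> T \<in> Opens \<and> transitive_set Opens T"

definition maximal_topen :: "'a set set \<Rightarrow> 'a set \<Rightarrow> bool" where
  "maximal_topen Opens T \<longleftrightarrow> topen Opens T \<and>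
     (\<forall>T'. topen Opens T' \<and> T \<subseteq> T' \<longrightarrow> T' = T)"

end

theory Submission
  imports Defs
begin

theorem corollary3p13:
  fixes P :: "'a set" and Opens :: "'a set set" and T :: "'a set"
  assumes "semitopology P Opens"
    and "topen Opens T"
  shows "\<exists>!M. maximal_topen Opens M \<and> T \<subseteq> M"
proof -
  define F where "F = {T'. topen Opens T' \<and> between T' T}"
  define M where "M = \<Union>F"
  have Tne: "T \<noteq> {}" and TO: "T \<in> Opens" and Ttr: "transitive_set Opens T"
    using assms(2) unfolding topen_def by auto
  have TF: "T \<in> F" using assms(2) Tne unfolding F_def between_def by auto
  hence TM: "T \<subseteq> M" unfolding M_def by auto
  have "F \<subseteq> Opens" unfolding F_def topen_def by auto
  hence MO: "M \<in> Opens" using assms(1) unfolding M_def semitopology_def by blast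
  have key: "between U T" if "U \<in> Opens" "between U M" for U
  proof -
    from that(2) obtain T1 where "T1 \<in> F" "between U T1"
      unfolding M_def between_def by auto
    then show ?thesis using that(1) TO unfolding F_def topen_def transitive_set_def by blast
  qed
  have Mtr: "transitive_set Opens M"
    unfolding transitive_set_def
  proof (intro ballI impI)
    fix U V assume "U \<in> Opens" "V \<in> Opens" "between U M \<and> between M V"
    then have "between U T" "between T V" using key[of U] key[of V]
      by (auto simp: between_def)
    then show "between U V" using Ttr \<open>U \<in> Opens\<close> \<open>V \<in> Opens\<close>
      unfolding transitive_set_def by blast
  qed
  have Mtop: "topen Opens M" using MO Mtr TM Tne unfolding topen_def by auto
  have sub: "T' \<subseteq> M" if "topen Opens T'" "T \<subseteq> T'" for T'
  proof -
    have "between T' T" using that(2) Tne unfolding between_def by auto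
    then have "T' \<in> F" using that(1) unfolding F_def by auto
    then show ?thesis unfolding M_def by auto
  qed
  have Mmax: "maximal_topen Opens M"
    unfolding maximal_topen_def using Mtop sub TM by blast
  show ?thesis
  proof (rule ex1I[of _ M])
    show "maximal_topen Opens M \<and> T \<subseteq> M" using Mmax TM by auto
  next
    fix M' assume "maximal_topen Opens M' \<and> T \<subseteq> M'"
    then have "topen Opens M'" "T \<subseteq> M'" "\<forall>T'. topen Opens T' \<and> M' \<subseteq> T' \<longrightarrow> T' = M'"
      unfolding maximal_topen_def by auto
    moreover have "M' \<subseteq> M" using sub calculation by auto
    ultimately show "M' = M" using Mtop by auto
  qed
qed

end
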